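(* Let $L\subset\mathbb{R}^n$ be an $n$-dimensional lattice and let $P$ be a Delaunay polytope of $L$ with vertex set $V(P)$. Let $$Y(P)=\Big\{y\in\mathbb{Z}^{V(P)}:\ \sum_{v\in V(P)}y(v)v=0,\ \sum_{v\in V(P)}y(v)=0\Big\}.$$ Consider unknowns $d(u,v)$, $u,v\in V(P)$, with $d(u,v)=d(v,u)$ and $d(v,v)=0$. Let $\mathcal{S}_{dist}(P)$ be the system of linear equations $$\sum_{v\in V(P)}y(v)\,d(u,v)=0\qquad\text{for all }y\in Y(P)\text{ and all }u\in V(P),$$ and let $\mathcal{S}_{hyp}(P)$ be the system of all equations $$\sum_{u,v\in V(P)}z(u)z(v)\,d(u,v)=0,\qquad z\in\mathbb{Z}^{V(P)},\ \sum_{v\in V(P)}z(v)=1,$$ that are satisfied by the distance $d_P(u,v)=\|u-v\|^2$. Then the systems $\mathcal{S}_{dist}(P)$ and $\mathcal{S}_{hyp}(P)$ are equivalent, i.e., they have the same solution set.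
   Context: A Delaunay polytope of a lattice $L\subset\mathbb{R}^n$ is a polytope whose vertex set is $L\cap S$, where $S=S(c,r)$ is an empty sphere: $\|a-c\|^2\ge r^2$ for all $a\in L$, and $S\cap L$ contains $n+1$ affinely independent points. *)

theory Defs
  imports "HOL-Analysis.Analysis"
begin

definition full_lattice :: "(real^'n) set \<Rightarrow> bool" where
  "full_lattice L \<longleftrightarrow> (\<exists>b :: 'n \<Rightarrow> real^'n. inj b \<and> independent (range b) \<and>
      L = {(\<Sum>i\<in>UNIV. of_int (c i) *\<^sub>R b i) | c :: 'n \<Rightarrow> int. True})"

text \<open>V is the vertex set of a Delaunay polytope of L: V = L \<inter> S for an empty sphere S = S(c,r)
  such that S \<inter> L contains n+1 affinely independent points.\<close>
definition delaunay_vertex_set :: "(real^'n) set \<Rightarrow> (real^'n) set \<Rightarrow> bool" where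
  "delaunay_vertex_set L V \<longleftrightarrow> (\<exists>(c::real^'n) (r::real).
      (\<forall>a\<in>L. (norm (a - c))\<^sup>2 \<ge> r\<^sup>2) \<and>
      V = {a\<in>L. (norm (a - c))\<^sup>2 = r\<^sup>2} \<and>
      (\<exists>T\<subseteq>V. card T = CARD('n) + 1 \<and> \<not> affine_dependent T))"

definition Y_set :: "(real^'n) set \<Rightarrow> ((real^'n) \<Rightarrow> int) set" where
  "Y_set V = {y. (\<Sum>v\<in>V. of_int (y v) *\<^sub>R v) = 0 \<and> (\<Sum>v\<in>V. y v) = 0}"

definition sat_dist :: "(real^'n) set \<Rightarrow> (real^'n \<Rightarrow> real^'n \<Rightarrow> real) \<Rightarrow> bool" where
  "sat_dist V d \<longleftrightarrow> (\<forall>y\<in>Y_set V. \<forall>u\<in>V. (\<Sum>v\<in>V. of_int (y v) * d u v) = 0)"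

definition sat_hyp :: "(real^'n) set \<Rightarrow> (real^'n \<Rightarrow> real^'n \<Rightarrow> real) \<Rightarrow> bool" where
  "sat_hyp V d \<longleftrightarrow> (\<forall>z :: real^'n \<Rightarrow> int. (\<Sum>v\<in>V. z v) = 1 \<longrightarrow>
      (\<Sum>u\<in>V. \<Sum>v\<in>V. of_int (z u * z v) * (norm (u - v))\<^sup>2) = 0 \<longrightarrow>
      (\<Sum>u\<in>V. \<Sum>v\<in>V. of_int (z u * z v) * d u v) = 0)"

end

theory Submission
  imports Defs
begin

lemma lattice_comb:
  fixes L :: "(real^'n) set"
  assumes "full_lattice L" and "finite F" and "F \<subseteq> L"
  shows "(\<Sum>v\<in>F. of_int (z v) *\<^sub>R v) \<in> L"
proof -
  obtain b :: "'n \<Rightarrow> real^'n" where Ld: "L = {(\<Sum>i\<in>UNIV. of_int (c i) *\<^sub>R b i) | c :: 'n \<Rightarrow> int. True}"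
    using assms(1) unfolding full_lattice_def by blast
  show ?thesis using assms(2,3)
  proof (induction F rule: finite_induct)
    case empty
    have "(0::real^'n) = (\<Sum>i\<in>UNIV. of_int ((\<lambda>_. 0::int) i) *\<^sub>R b i)" by simp
    show ?case unfolding Ld by (rule CollectI, rule exI[where x="\<lambda>_. 0"]) simp
  next
    case (insert x F)
    then have "(\<Sum>v\<in>F. of_int (z v) *\<^sub>R v) \<in> L" and "x \<in> L" by auto
    then obtain c1 c2 where c1: "(\<Sum>v\<in>F. of_int (z v) *\<^sub>R v) = (\<Sum>i\<in>UNIV. of_int (c1 i) *\<^sub>R b i)"
      and c2: "x = (\<Sum>i\<in>UNIV. of_int (c2 i) *\<^sub>R b i)" unfolding Ld by blast
    have "(\<Sum>v\<in>insert x F. of_int (z v) *\<^sub>R v) = of_int (z x) *\<^sub>R x + (\<Sum>v\<in>F. of_int (z v) *\<^sub>R v)"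
      using insert by simp
    also have "\<dots> = (\<Sum>i\<in>UNIV. of_int (z x * c2 i + c1 i) *\<^sub>R b i)"
      unfolding c1 c2 by (simp add: scaleR_sum_right sum.distrib scaleR_add_left)
    finally have fe: "(\<Sum>v\<in>insert x F. of_int (z v) *\<^sub>R v) = (\<Sum>i\<in>UNIV. of_int (z x * c2 i + c1 i) *\<^sub>R b i)" .
    show ?case unfolding Ld by (rule CollectI, rule exI[where x="\<lambda>i. z x * c2 i + c1 i"]) (simp add: fe)
  qed
qed

lemma quad:
  fixes V :: "(real^'n) set" and z :: "real^'n \<Rightarrow> int"
  assumes "finite V" and sph: "\<forall>u\<in>V. (norm (u - c))\<^sup>2 = r\<^sup>2" and sz: "(\<Sum>v\<in>V. z v) = 1"
  shows "(\<Sum>u\<in>V. \<Sum>v\<in>V. of_int (z u * z v) * (norm (u - v))\<^sup>2)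
         = 2 * r\<^sup>2 - 2 * (norm ((\<Sum>v\<in>V. of_int (z v) *\<^sub>R v) - c))\<^sup>2"
proof -
  have szr: "(\<Sum>v\<in>V. real_of_int (z v)) = 1" using sz by (metis of_int_1 of_int_sum)
  have e: "(norm (u - v))\<^sup>2 = r\<^sup>2 + r\<^sup>2 - 2 * ((u - c) \<bullet> (v - c))" if "u \<in> V" "v \<in> V" for u v
  proof -
    have "(norm (u - v))\<^sup>2 = (norm ((u - c) - (v - c)))\<^sup>2" by simp
    also have "\<dots> = (norm (u - c))\<^sup>2 + (norm (v - c))\<^sup>2 - 2 * ((u - c) \<bullet> (v - c))"
      by (simp add: power2_norm_eq_inner inner_diff_left inner_diff_right inner_commute)
    finally show ?thesis using sph that by simp
  qed
  have w: "(\<Sum>v\<in>V. of_int (z v) *\<^sub>R v) - c = (\<Sum>v\<in>V. of_int (z v) *\<^sub>R (v - c))"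
    by (simp add: scaleR_diff_right sum_subtractf scaleR_sum_left[symmetric] szr)
  have "(\<Sum>u\<in>V. \<Sum>v\<in>V. of_int (z u * z v) * (norm (u - v))\<^sup>2)
      = (\<Sum>u\<in>V. \<Sum>v\<in>V. of_int (z u) * of_int (z v) * (2 * r\<^sup>2) - 2 * (of_int (z u) * of_int (z v) * ((u - c) \<bullet> (v - c))))"
  proof (intro sum.cong refl)
    fix u v assume "u \<in> V" "v \<in> V"
    then show "of_int (z u * z v) * (norm (u - v))\<^sup>2 = of_int (z u) * of_int (z v) * (2 * r\<^sup>2) - 2 * (of_int (z u) * of_int (z v) * ((u - c) \<bullet> (v - c)))"
      unfolding e[OF \<open>u \<in> V\<close> \<open>v \<in> V\<close>] by (simp add: algebra_simps)
  qed
  also have "\<dots> = (\<Sum>u\<in>V. \<Sum>v\<in>V. of_int (z u) * of_int (z v) * (2 * r\<^sup>2))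
       - 2 * (\<Sum>u\<in>V. \<Sum>v\<in>V. of_int (z u) * of_int (z v) * ((u - c) \<bullet> (v - c)))"
    by (simp only: sum_subtractf sum_distrib_left)
  also have "(\<Sum>u\<in>V. \<Sum>v\<in>V. of_int (z u) * of_int (z v) * (2 * r\<^sup>2)) = 2 * r\<^sup>2 * ((\<Sum>u\<in>V. real_of_int (z u)) * (\<Sum>v\<in>V. real_of_int (z v)))"
    by (simp add: sum_distrib_left sum_distrib_right mult_ac)
  also have "(\<Sum>u\<in>V. \<Sum>v\<in>V. of_int (z u) * of_int (z v) * ((u - c) \<bullet> (v - c)))
       = (\<Sum>v\<in>V. of_int (z v) *\<^sub>R (v - c)) \<bullet> (\<Sum>v\<in>V. of_int (z v) *\<^sub>R (v - c))"
    apply (simp only: inner_sum_left inner_sum_right inner_scaleR_left inner_scaleR_right mult.assoc sum_distrib_left)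
    apply (subst sum.swap)
    apply (intro sum.cong refl)
    apply (simp add: mult_ac)
    done
  finally show ?thesis using szr w by (simp add: power2_norm_eq_inner)
qed

theorem lemma2:
  fixes L V :: "(real^'n) set"
  assumes "full_lattice L"
    and "delaunay_vertex_set L V"
  shows "\<forall>d :: real^'n \<Rightarrow> real^'n \<Rightarrow> real.
           (\<forall>u\<in>V. \<forall>v\<in>V. d u v = d v u) \<and> (\<forall>v\<in>V. d v v = 0) \<longrightarrow>
           (sat_dist V d \<longleftrightarrow> sat_hyp V d)"
proof (intro allI impI)
  fix d :: "real^'n \<Rightarrow> real^'n \<Rightarrow> real"
  assume "(\<forall>u\<in>V. \<forall>v\<in>V. d u v = d v u) \<and> (\<forall>v\<in>V. d v v = 0)"
  then have sym: "\<And>u v. u \<in> V \<Longrightarrow> v \<in> V \<Longrightarrow> d u v = d v u" and dg: "\<And>v. v \<in> V \<Longrightarrow> d v v = 0" by auto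
  show "sat_dist V d \<longleftrightarrow> sat_hyp V d"
  proof (cases "finite V")
    case False
    then show ?thesis unfolding sat_dist_def sat_hyp_def by simp
  next
    case fin: True
    obtain c r where Vd: "V = {a\<in>L. (norm (a - c))\<^sup>2 = r\<^sup>2}"
      using assms(2) unfolding delaunay_vertex_set_def by blast
    have sph: "\<forall>u\<in>V. (norm (u - c))\<^sup>2 = r\<^sup>2" and VL: "V \<subseteq> L" using Vd by auto
    show ?thesis
    proof
      assume sd: "sat_dist V d"
      show "sat_hyp V d" unfolding sat_hyp_def
      proof (intro allI impI)
        fix z :: "real^'n \<Rightarrow> int"
        assume sz: "(\<Sum>v\<in>V. z v) = 1"
          and hq: "(\<Sum>u\<in>V. \<Sum>v\<in>V. of_int (z u * z v) * (norm (u - v))\<^sup>2) = 0"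
        define w where "w = (\<Sum>v\<in>V. of_int (z v) *\<^sub>R v)"
        have "(norm (w - c))\<^sup>2 = r\<^sup>2" using quad[OF fin sph sz] hq unfolding w_def by simp
        moreover have "w \<in> L" unfolding w_def by (rule lattice_comb[OF assms(1) fin VL])
        ultimately have wV: "w \<in> V" using Vd by auto
        define y where "y = (\<lambda>v. z v - (if v = w then 1 else 0))"
        have "(\<Sum>v\<in>V. of_int (y v) *\<^sub>R v) = w - (\<Sum>v\<in>V. (if v = w then v else 0))"
          proof -
          have "(\<Sum>v\<in>V. of_int (y v) *\<^sub>R v) = (\<Sum>v\<in>V. of_int (z v) *\<^sub>R v - (if v = w then v else 0))"
            by (intro sum.cong refl) (simp add: y_def scaleR_diff_left)
          then show ?thesis by (simp add: sum_subtractf w_def)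
        qed
        also have "\<dots> = 0" using fin wV by (simp add: sum.delta')
        finally have "(\<Sum>v\<in>V. of_int (y v) *\<^sub>R v) = 0" .
        moreover have "(\<Sum>v\<in>V. y v) = 0"
          unfolding y_def using fin wV sz by (simp add: sum_subtractf sum.delta')
        ultimately have "y \<in> Y_set V" unfolding Y_set_def by simp
        then have yu: "(\<Sum>v\<in>V. of_int (y v) * d u v) = 0" if "u \<in> V" for u
          using sd that unfolding sat_dist_def by blast
        have zu: "(\<Sum>v\<in>V. of_int (z v) * d u v) = d u w" if "u \<in> V" for u
        proof -
          have "(\<Sum>v\<in>V. of_int (y v) * d u v) = (\<Sum>v\<in>V. of_int (z v) * d u v) - d u w"
          proof -
            have "(\<Sum>v\<in>V. of_int (y v) * d u v) = (\<Sum>v\<in>V. of_int (z v) * d u v - (if v = w then d u v else 0))"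
              by (intro sum.cong refl) (simp add: y_def left_diff_distrib)
            then show ?thesis using fin wV by (simp add: sum_subtractf)
          qed
          then show ?thesis using yu[OF that] by simp
        qed
        have "(\<Sum>u\<in>V. \<Sum>v\<in>V. of_int (z u * z v) * d u v) = (\<Sum>u\<in>V. of_int (z u) * (\<Sum>v\<in>V. of_int (z v) * d u v))"
          by (simp add: sum_distrib_left mult.assoc)
        also have "\<dots> = (\<Sum>u\<in>V. of_int (z u) * d w u)"
          by (intro sum.cong refl) (simp add: zu sym wV)
        also have "\<dots> = d w w" using zu[OF wV] by simp
        finally show "(\<Sum>u\<in>V. \<Sum>v\<in>V. of_int (z u * z v) * d u v) = 0" using dg[OF wV] by simp
      qed
    next
      assume sh: "sat_hyp V d"
      show "sat_dist V d" unfolding sat_dist_def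
      proof (intro ballI)
        fix y u assume yY: "y \<in> Y_set V" and uV: "u \<in> V"
        have y0: "(\<Sum>v\<in>V. of_int (y v) *\<^sub>R v) = 0" and ys: "(\<Sum>v\<in>V. y v) = 0"
          using yY unfolding Y_set_def by auto
        define A where "A = (\<Sum>v\<in>V. of_int (y v) * d u v)"
        define B where "B = (\<Sum>a\<in>V. \<Sum>b\<in>V. of_int (y a * y b) * d a b)"
        have key: "2 * of_int t * A + of_int t ^ 2 * B = 0" for t :: int
        proof -
          define z where "z = (\<lambda>v. t * y v + (if v = u then 1 else 0))"
          have sz: "(\<Sum>v\<in>V. z v) = 1" unfolding z_def using fin uV ys
            by (simp add: sum.distrib sum_distrib_left[symmetric])
          have "(\<Sum>v\<in>V. of_int (z v) *\<^sub>R v) = of_int t *\<^sub>R (\<Sum>v\<in>V. of_int (y v) *\<^sub>R v) + u"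
          proof -
            have "(\<Sum>v\<in>V. of_int (z v) *\<^sub>R v) = (\<Sum>v\<in>V. of_int t *\<^sub>R (of_int (y v) *\<^sub>R v) + (if v = u then v else 0))"
              by (intro sum.cong refl) (simp add: z_def scaleR_add_left)
            then show ?thesis using fin uV by (simp add: sum.distrib scaleR_sum_right)
          qed
          then have "(\<Sum>v\<in>V. of_int (z v) *\<^sub>R v) = u" using y0 by simp
          then have "(\<Sum>u\<in>V. \<Sum>v\<in>V. of_int (z u * z v) * (norm (u - v))\<^sup>2) = 0"
            using quad[OF fin sph sz] sph uV by simp
          then have h: "(\<Sum>a\<in>V. \<Sum>b\<in>V. of_int (z a * z b) * d a b) = 0"
            using sh sz unfolding sat_hyp_def by blast
          have "(\<Sum>a\<in>V. \<Sum>b\<in>V. of_int (z a * z b) * d a b) = d u u + of_int t * A + of_int t * (\<Sum>a\<in>V. of_int (y a) * d a u) + of_int t ^ 2 * B"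
          proof -
            have "(\<Sum>a\<in>V. \<Sum>b\<in>V. of_int (z a * z b) * d a b) = (\<Sum>a\<in>V. \<Sum>b\<in>V.
               of_int t ^ 2 * (of_int (y a * y b) * d a b) + of_int t * (of_int (y a) * (if b = u then d a b else 0))
               + of_int t * (if a = u then of_int (y b) * d a b else 0) + (if a = u then (if b = u then d a b else 0) else 0))"
              by (intro sum.cong refl) (simp add: z_def algebra_simps power2_eq_square)
            also have "\<dots> = of_int t ^ 2 * B + of_int t * (\<Sum>a\<in>V. of_int (y a) * d a u) + of_int t * A + d u u"
            proof -
              have q: "(\<Sum>b\<in>V. of_int t * (of_int (y a) * (if b = u then d a b else 0))) = of_int t * (of_int (y a) * d a u)" for a
                using fin uV by (simp add: sum_distrib_left[symmetric] sum.delta')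
              have r: "(\<Sum>a\<in>V. \<Sum>b\<in>V. of_int t * (if a = u then of_int (y b) * d a b else 0)) = of_int t * A"
                unfolding A_def using fin uV by (simp add: sum_distrib_left[symmetric] sum.delta' sum.swap[of _ V V])
              have s: "(\<Sum>a\<in>V. \<Sum>b\<in>V. (if a = u then (if b = u then d a b else 0) else 0)) = d u u"
              proof -
                have "(\<Sum>b\<in>V. (if a = u then (if b = u then d a b else 0) else 0)) = (if a = u then d a u else 0)" for a
                  using fin uV by (cases "a = u") (simp_all add: sum.delta')
                then show ?thesis using fin uV by (simp add: sum.delta')
              qed
              show ?thesis unfolding sum.distrib q r s
                by (simp add: B_def sum_distrib_left)
            qed
            finally show ?thesis by simp
          qed
          moreover have "(\<Sum>a\<in>V. of_int (y a) * d a u) = A" unfolding A_def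
            by (intro sum.cong refl) (simp add: sym uV)
          ultimately show ?thesis using h dg[OF uV] by (simp add: mult_ac)
        qed
        from key[of 1] key[of "-1"] show "A = 0" by simp
      qed
    qed
  qed
qed

end
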